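(* Let $K\ge1$, $a>0$, $N\ge2$, $B>0$, let $J\subset\mathbb R$ be a bounded interval, $\xi_J\in\mathbb R$, and $\omega_J$ an interval of length $|J|^{-1}$ containing $\xi_J$. Let $\phi_J$ be a smooth function with $\mathrm{supp}\,\phi_J\subset u(K)J$ and $|\widehat{\phi_J}(\zeta)|\le Be^{-aK/12}|J|^{1/2}(|J||\zeta-\xi_J|)^{-N}$ for all $|\zeta-\xi_J|\ge2|J|^{-1}$. Set $\Xi(J)=5\omega_J\cap\frac{1}{3u(K)|J|}\mathbb Z$. If $h\in L^1(\mathbb R)$ is supported in $3u(K)J$ and satisfies $\int_{\mathbb R}h(x)e^{-2\pi i\zeta x}dx=0$ for all $\zeta\in\Xi(J)$, then $$|\langle h,|J|^{1/2}\phi_J\rangle|\le C e^{-aK/12}\|h\|_1,$$ with $C$ depending only on $B$ and $N$.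
   Context: $u:[0,\infty)\to(0,\infty)$ is an increasing function (with $u(K)\ge1$ in the relevant range). For an interval $I$ and $c>0$, $cI$ is the interval with the same center and length $c|I|$. $\langle f,g\rangle=\int f\overline g$. $\widehat f(\xi)=\int f(x)e^{-2\pi ix\xi}dx$. *)

theory Defs
  imports "HOL-Analysis.Analysis"
begin

definition bdd_interval :: "real set \<Rightarrow> bool" where
  "bdd_interval I \<longleftrightarrow> is_interval I \<and> bounded I \<and> I \<noteq> {} \<and> Inf I < Sup I"

definition ilen :: "real set \<Rightarrow> real" where
  "ilen I = Sup I - Inf I"

definition icenter :: "real set \<Rightarrow> real" where
  "icenter I = (Sup I + Inf I) / 2"

definition iscale :: "real \<Rightarrow> real set \<Rightarrow> real set" where
  "iscale c I = {icenter I - c * ilen I / 2 .. icenter I + c * ilen I / 2}"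

definition fourier :: "(real \<Rightarrow> complex) \<Rightarrow> real \<Rightarrow> complex" where
  "fourier f \<xi> = (LINT x|lborel. f x * cis (- 2 * pi * x * \<xi>))"

definition inner_L2 :: "(real \<Rightarrow> complex) \<Rightarrow> (real \<Rightarrow> complex) \<Rightarrow> complex" where
  "inner_L2 f g = (LINT x|lborel. f x * cnj (g x))"

definition L1_norm :: "(real \<Rightarrow> complex) \<Rightarrow> real" where
  "L1_norm f = (LINT x|lborel. norm (f x))"

definition supp :: "(real \<Rightarrow> complex) \<Rightarrow> real set" where
  "supp f = closure {x. f x \<noteq> 0}"

fun vderiv_iter :: "nat \<Rightarrow> (real \<Rightarrow> complex) \<Rightarrow> real \<Rightarrow> complex" where
  "vderiv_iter 0 f = f"
| "vderiv_iter (Suc n) f = (\<lambda>x. vector_derivative (vderiv_iter n f) (at x))"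

definition smooth :: "(real \<Rightarrow> complex) \<Rightarrow> bool" where
  "smooth f \<longleftrightarrow> (\<forall>n x. vderiv_iter n f differentiable at x)"

end

theory Submission imports Defs "HOL-Library.Nat_Bijection" begin


lemma tel_aux:
  fixes s t0 :: real
  assumes "0 < s" "s < t0"
  shows "(\<Sum>j<n. s / (t0 + real j * s)^2) \<le> 1/(t0 - s) - 1/(t0 + (real n - 1) * s)"
proof (induction n)
  case 0 then show ?case by simp
next
  case (Suc n)
  have ns: "0 \<le> real n * s" using assms by simp
  have e1: "t0 + (real n - 1) * s = (t0 - s) + real n * s" by (simp add: algebra_simps)
  have p1: "t0 + (real n - 1) * s > 0" unfolding e1 using assms ns by linarith
  have p2: "t0 + real n * s > 0" using assms ns by linarith
  have le: "t0 + (real n - 1) * s \<le> t0 + real n * s" using assms by (simp add: algebra_simps)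
  have eq: "1/(t0 + (real n - 1) * s) - 1/(t0 + real n * s) = s / ((t0 + (real n - 1) * s) * (t0 + real n * s))"
    using p1 p2 by (simp add: field_simps)
  have "(t0 + (real n - 1) * s) * (t0 + real n * s) \<le> (t0 + real n * s)^2"
    unfolding power2_eq_square using le p2 by (intro mult_right_mono) auto
  then have "s / (t0 + real n * s)^2 \<le> s / ((t0 + (real n - 1) * s) * (t0 + real n * s))"
    using p1 p2 assms by (intro divide_left_mono) auto
  then show ?case using Suc eq by (simp add: algebra_simps)
qed
lemma tel_sum:
  fixes s y :: real
  assumes s: "0 < s" "s \<le> 1/3" and S: "finite S" and pos: "\<forall>k\<in>S. real_of_int k * s - y \<ge> 2"
  shows "(\<Sum>k\<in>S. s / (real_of_int k * s - y)^2) \<le> 1"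
proof (cases "S = {}")
  case True then show ?thesis by simp
next
  case False
  define k0 where "k0 = Min S"
  have k0S: "k0 \<in> S" using False S by (simp add: k0_def)
  define t0 where "t0 = real_of_int k0 * s - y"
  have t0: "t0 \<ge> 2" using pos k0S t0_def by auto
  define n where "n = Suc (nat (Max S - k0))"
  have sub: "S \<subseteq> (\<lambda>j. k0 + int j) ` {..<n}"
  proof
    fix k assume k: "k \<in> S"
    have "k0 \<le> k" "k \<le> Max S" using k S by (auto simp: k0_def)
    then have "k = k0 + int (nat (k - k0))" "nat (k - k0) < n" by (auto simp: n_def)
    then show "k \<in> (\<lambda>j. k0 + int j) ` {..<n}" by blast
  qed
  have "(\<Sum>k\<in>S. s / (real_of_int k * s - y)^2) \<le> (\<Sum>k\<in>(\<lambda>j. k0 + int j) ` {..<n}. s / (real_of_int k * s - y)^2)"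
    using sub s by (intro sum_mono2) auto
  also have "\<dots> = (\<Sum>j<n. s / (real_of_int (k0 + int j) * s - y)^2)"
    by (subst sum.reindex) (auto simp: inj_on_def)
  also have "\<dots> = (\<Sum>j<n. s / (t0 + real j * s)^2)"
    by (simp add: t0_def algebra_simps)
  also have "\<dots> \<le> 1/(t0 - s) - 1/(t0 + (real n - 1) * s)"
    using tel_aux[of s t0 n] s t0 by simp
  also have "\<dots> \<le> 1/(t0 - s)"
  proof -
    have e1: "t0 + (real n - 1) * s = (t0 - s) + real n * s" by (simp add: algebra_simps)
    have "0 \<le> real n * s" using s by simp
    then have "t0 + (real n - 1) * s > 0" unfolding e1 using s t0 by linarith
    then show ?thesis by simp
  qed
  also have "\<dots> \<le> 1" using s t0 by (simp add: divide_simps)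
  finally show ?thesis .
qed

lemma lattice_sum:
  fixes s y N :: real
  assumes s: "0 < s" "s \<le> 1/3" and N: "N \<ge> 2" and S: "finite S"
    and far: "\<forall>k\<in>S. \<bar>real_of_int k * s - y\<bar> \<ge> 2"
  shows "(\<Sum>k\<in>S. s * \<bar>real_of_int k * s - y\<bar> powr (-N)) \<le> 2"
proof -
  have pw: "s * \<bar>real_of_int k * s - y\<bar> powr (-N) \<le> s / (real_of_int k * s - y)^2" if "k \<in> S" for k
  proof -
    let ?t = "\<bar>real_of_int k * s - y\<bar>"
    have t: "?t \<ge> 2" using far that by auto
    have "?t powr (-N) \<le> ?t powr (-2)" using t N by (intro powr_mono) auto
    also have "\<dots> = 1 / ?t^2" using t by (simp add: powr_minus powr_numeral divide_simps)
    finally show ?thesis using s by (simp add: divide_simps mult_left_mono)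
  qed
  let ?P = "{k\<in>S. real_of_int k * s - y \<ge> 2}" and ?M = "{k\<in>S. \<not> real_of_int k * s - y \<ge> 2}"
  have "(\<Sum>k\<in>S. s * \<bar>real_of_int k * s - y\<bar> powr (-N)) \<le> (\<Sum>k\<in>S. s / (real_of_int k * s - y)^2)"
    using pw by (rule sum_mono)
  also have "\<dots> = (\<Sum>k\<in>?P. s / (real_of_int k * s - y)^2) + (\<Sum>k\<in>?M. s / (real_of_int k * s - y)^2)"
    using S by (subst sum.union_disjoint[symmetric]) (auto intro!: sum.cong)
  also have "(\<Sum>k\<in>?P. s / (real_of_int k * s - y)^2) \<le> 1"
    using S s by (intro tel_sum) auto
  also have "(\<Sum>k\<in>?M. s / (real_of_int k * s - y)^2) = (\<Sum>k\<in>uminus ` ?M. s / (real_of_int k * s - (-y))^2)"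
  proof -
    have "(\<Sum>k\<in>uminus ` ?M. s / (real_of_int k * s - (-y))^2) = (\<Sum>k\<in>?M. s / (real_of_int (-k) * s - (-y))^2)"
      by (subst sum.reindex) (auto simp: inj_on_def)
    also have "\<dots> = (\<Sum>k\<in>?M. s / (real_of_int k * s - y)^2)"
    proof (rule sum.cong)
      fix k show "s / (real_of_int (-k) * s - (-y))^2 = s / (real_of_int k * s - y)^2"
        by (simp add: power2_eq_square algebra_simps)
    qed simp
    finally show ?thesis by simp
  qed
  also have "\<dots> \<le> 1"
    using S s far by (intro tel_sum) auto
  finally show ?thesis by simp
qed



definition trig :: "real \<Rightarrow> (real \<Rightarrow> complex) \<Rightarrow> bool" where
  "trig w F \<longleftrightarrow> (\<exists>xs::(int\<times>complex) list. \<forall>x. F x = (\<Sum>(k,c)\<leftarrow>xs. c * cis (w * of_int k * x)))"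

lemma trig_const: "trig w (\<lambda>x. c)"
  unfolding trig_def by (rule exI[of _ "[(0,c)]"]) simp

lemma trig_add: "trig w F \<Longrightarrow> trig w G \<Longrightarrow> trig w (\<lambda>x. F x + G x)"
  proof -
  assume "trig w F" "trig w G"
  then obtain xs ys where F: "\<forall>x. F x = (\<Sum>(k,c)\<leftarrow>xs. c * cis (w * of_int k * x))"
    and G: "\<forall>x. G x = (\<Sum>(k,c)\<leftarrow>ys. c * cis (w * of_int k * x))" unfolding trig_def by blast
  have "\<forall>x. F x + G x = (\<Sum>(k,c)\<leftarrow>xs@ys. c * cis (w * of_int k * x))" using F G by simp
  then show ?thesis unfolding trig_def by blast
qed

lemma trig_cmul_cis: "trig w F \<Longrightarrow> trig w (\<lambda>x. c * cis (w * of_int k * x) * F x)"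
proof -
  assume "trig w F"
  then obtain xs where F: "\<forall>x. F x = (\<Sum>(j,d)\<leftarrow>xs. d * cis (w * of_int j * x))" unfolding trig_def by blast
  have "\<forall>x. c * cis (w * of_int k * x) * (\<Sum>(j,d)\<leftarrow>xs. d * cis (w * of_int j * x))
      = (\<Sum>(j,d)\<leftarrow>map (\<lambda>(j,d). (k+j, c*d)) xs. d * cis (w * of_int j * x))"
  proof
    fix x show "c * cis (w * of_int k * x) * (\<Sum>(j,d)\<leftarrow>xs. d * cis (w * of_int j * x))
      = (\<Sum>(j,d)\<leftarrow>map (\<lambda>(j,d). (k+j, c*d)) xs. d * cis (w * of_int j * x))"
    proof (induction xs)
      case Nil then show ?case by simp
    next
      case (Cons a xs)
      obtain j d where a: "a = (j,d)" by force
      have "cis (w * of_int (k + j) * x) = cis (w * of_int k * x) * cis (w * of_int j * x)"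
        by (simp add: cis_mult algebra_simps)
      then show ?case using Cons by (simp add: a algebra_simps)
    qed
  qed
  then have "\<forall>x. c * cis (w * of_int k * x) * F x
      = (\<Sum>(j,d)\<leftarrow>map (\<lambda>(j,d). (k+j, c*d)) xs. d * cis (w * of_int j * x))" using F by simp
  then show ?thesis unfolding trig_def by blast
qed

lemma trig_mult: "trig w F \<Longrightarrow> trig w G \<Longrightarrow> trig w (\<lambda>x. F x * G x)"
proof -
  assume G: "trig w G"
  assume "trig w F"
  then obtain xs where F: "\<forall>x. F x = (\<Sum>(j,d)\<leftarrow>xs. d * cis (w * of_int j * x))" unfolding trig_def by blast
  have "trig w (\<lambda>x. (\<Sum>(j,d)\<leftarrow>xs. d * cis (w * of_int j * x)) * G x)"
  proof (induction xs)
    case Nil then show ?case using trig_const[of w 0] by simp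
  next
    case (Cons a xs)
    obtain j d where a: "a = (j,d)" by force
    have "trig w (\<lambda>x. d * cis (w * of_int j * x) * G x + (\<Sum>(j,d)\<leftarrow>xs. d * cis (w * of_int j * x)) * G x)"
      by (intro trig_add trig_cmul_cis Cons G)
    then show ?case by (simp add: a algebra_simps)
  qed
  then show ?thesis using F by simp
qed

lemma trig_cos: "trig w (\<lambda>x. complex_of_real (cos (w * (x - c0))))"
proof -
  have "\<forall>x. complex_of_real (cos (w * (x - c0))) = (\<Sum>(k,c)\<leftarrow>[(1, cis (-(w*c0)) / 2), (-1, cis (w*c0) / 2)]. c * cis (w * of_int k * x))"
  proof
    fix x
    have "complex_of_real (cos (w * (x - c0))) = (cis (w * (x - c0)) + cis (-(w * (x - c0)))) / 2"
      by (simp add: complex_eq_iff cos_of_real)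
    also have "\<dots> = cis (-(w*c0)) / 2 * cis (w * x) + cis (w*c0) / 2 * cis (-(w * x))"
    proof -
      have "cis (w * (x - c0)) = cis (-(w*c0)) * cis (w * x)" "cis (-(w * (x - c0))) = cis (w*c0) * cis (-(w * x))"
        by (simp_all add: cis_mult algebra_simps)
      then show ?thesis by (simp add: algebra_simps)
    qed
    finally show "complex_of_real (cos (w * (x - c0))) = (\<Sum>(k,c)\<leftarrow>[(1, cis (-(w*c0)) / 2), (-1, cis (w*c0) / 2)]. c * cis (w * of_int k * x))"
      by simp
  qed
  then show ?thesis unfolding trig_def by blast
qed

lemma trig_sin: "trig w (\<lambda>x. complex_of_real (sin (w * (x - c0))))"
proof -
  have "\<forall>x. complex_of_real (sin (w * (x - c0))) = (\<Sum>(k,c)\<leftarrow>[(1, cis (-(w*c0)) / (2*\<i>)), (-1, - cis (w*c0) / (2*\<i>))]. c * cis (w * of_int k * x))"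
  proof
    fix x
    have "complex_of_real (sin (w * (x - c0))) = (cis (w * (x - c0)) - cis (-(w * (x - c0)))) / (2*\<i>)"
      by (simp add: complex_eq_iff sin_of_real)
    also have "\<dots> = cis (-(w*c0)) / (2*\<i>) * cis (w * x) + (- cis (w*c0) / (2*\<i>)) * cis (-(w * x))"
    proof -
      have "cis (w * (x - c0)) = cis (-(w*c0)) * cis (w * x)" "cis (-(w * (x - c0))) = cis (w*c0) * cis (-(w * x))"
        by (simp_all add: cis_mult algebra_simps)
      then show ?thesis by (simp add: algebra_simps diff_divide_distrib)
    qed
    finally show "complex_of_real (sin (w * (x - c0))) = (\<Sum>(k,c)\<leftarrow>[(1, cis (-(w*c0)) / (2*\<i>)), (-1, - cis (w*c0) / (2*\<i>))]. c * cis (w * of_int k * x))"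
      by simp
  qed
  then show ?thesis unfolding trig_def by blast
qed

lemma trig_rpf:
  fixes q :: "complex \<Rightarrow> real"
  assumes "real_polynomial_function q"
  shows "trig w (\<lambda>x. complex_of_real (q (cis (w * (x - c0)))))"
  using assms
proof (induction q rule: real_polynomial_function.induct)
  case (linear f)
  have lin: "f z = Re z * f 1 + Im z * f \<i>" for z
  proof -
    have "z = Re z *\<^sub>R 1 + Im z *\<^sub>R \<i>" by (simp add: complex_eq_iff)
    then have "f z = f (Re z *\<^sub>R 1 + Im z *\<^sub>R \<i>)" by simp
    also have "\<dots> = Re z * f 1 + Im z * f \<i>"
      by (simp add: linear_add[OF bounded_linear.linear[OF linear]] linear_scale[OF bounded_linear.linear[OF linear]])
    finally show ?thesis .
  qed
  have "trig w (\<lambda>x. complex_of_real (cos (w * (x - c0))) * of_real (f 1) + complex_of_real (sin (w * (x - c0))) * of_real (f \<i>))"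
    by (intro trig_add trig_mult trig_cos trig_sin trig_const)
  have lin2: "complex_of_real (f (cis (w * (x - c0)))) = complex_of_real (cos (w * (x - c0))) * of_real (f 1) + complex_of_real (sin (w * (x - c0))) * of_real (f \<i>)" for x
    using lin[of "cis (w * (x - c0))"] by simp
  show ?case unfolding lin2 by fact
next
  case (const c) then show ?case by (rule trig_const)
next
  case (add f g) then show ?case by (simp add: trig_add)
next
  case (mult f g) then show ?case by (simp add: trig_mult)
qed

lemma trig_poly:
  fixes p :: "complex \<Rightarrow> complex"
  assumes "polynomial_function p"
  shows "trig w (\<lambda>x. p (cis (w * (x - c0))))"
proof -
  have "real_polynomial_function (Re \<circ> p)" "real_polynomial_function (Im \<circ> p)"
    using assms unfolding polynomial_function_def by (auto intro: bounded_linear_Re bounded_linear_Im)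
  then have "trig w (\<lambda>x. complex_of_real ((Re \<circ> p) (cis (w * (x - c0)))) + complex_of_real ((Im \<circ> p) (cis (w * (x - c0)))) * \<i>)"
    by (intro trig_add trig_mult trig_rpf trig_const)
  moreover have "\<And>z. complex_of_real (Re z) + complex_of_real (Im z) * \<i> = z" by (simp add: complex_eq_iff)
  ultimately show ?thesis by simp
qed

lemma trig_orth:
  fixes Dm :: "real \<Rightarrow> complex"
  assumes Dm: "integrable lborel Dm"
    and orth: "\<And>k. (LINT x|lborel. Dm x * cnj (cis (w * of_int k * x))) = 0"
    and P: "trig w P"
  shows "integrable lborel (\<lambda>x. Dm x * cnj (P x)) \<and> (LINT x|lborel. Dm x * cnj (P x)) = 0"
proof -
  obtain xs where F: "\<forall>x. P x = (\<Sum>(j,d)\<leftarrow>xs. d * cis (w * of_int j * x))" using P unfolding trig_def by blast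
  have int1: "integrable lborel (\<lambda>x. Dm x * cnj (cis (w * of_int k * x)))" for k
  proof (rule Bochner_Integration.integrable_bound[OF Dm])
    have m: "Dm \<in> borel_measurable borel" using Dm by (simp add: borel_measurable_integrable)
    have "(\<lambda>x. cnj (cis (w * of_int k * x))) \<in> borel_measurable borel"
      by (intro borel_measurable_continuous_onI continuous_intros)
    then show "(\<lambda>x. Dm x * cnj (cis (w * of_int k * x))) \<in> borel_measurable lborel"
      using m by (simp add: borel_measurable_times)
  qed (auto simp: norm_mult)
  have "integrable lborel (\<lambda>x. Dm x * cnj (\<Sum>(j,d)\<leftarrow>xs. d * cis (w * of_int j * x))) \<and>
        (LINT x|lborel. Dm x * cnj (\<Sum>(j,d)\<leftarrow>xs. d * cis (w * of_int j * x))) = 0"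
  proof (induction xs)
    case Nil then show ?case by simp
  next
    case (Cons a xs)
    obtain j d where a: "a = (j,d)" by force
    have e: "Dm x * cnj (\<Sum>(j,d)\<leftarrow>a#xs. d * cis (w * of_int j * x)) =
      cnj d * (Dm x * cnj (cis (w * of_int j * x))) + Dm x * cnj (\<Sum>(j,d)\<leftarrow>xs. d * cis (w * of_int j * x))" for x
      by (simp add: a distrib_left mult.left_commute)
    have i1: "integrable lborel (\<lambda>x. cnj d * (Dm x * cnj (cis (w * of_int j * x))))"
      using int1[of j] by (rule integrable_mult_right)
    have i2: "integrable lborel (\<lambda>x. Dm x * cnj (\<Sum>(j,d)\<leftarrow>xs. d * cis (w * of_int j * x)))"
      using Cons by (rule conjunct1)
    have "(LINT x|lborel. cnj d * (Dm x * cnj (cis (w * of_int j * x))) + Dm x * cnj (\<Sum>(j,d)\<leftarrow>xs. d * cis (w * of_int j * x)))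
       = (LINT x|lborel. cnj d * (Dm x * cnj (cis (w * of_int j * x)))) + (LINT x|lborel. Dm x * cnj (\<Sum>(j,d)\<leftarrow>xs. d * cis (w * of_int j * x)))"
      using i1 i2 by (rule Bochner_Integration.integral_add)
    also have "\<dots> = 0"
    proof -
      have z2: "(LINT x|lborel. Dm x * cnj (\<Sum>(j,d)\<leftarrow>xs. d * cis (w * of_int j * x))) = 0"
        using Cons by (rule conjunct2)
      have z1: "(LINT x|lborel. cnj d * (Dm x * cnj (cis (w * of_int j * x)))) = cnj d * (LINT x|lborel. Dm x * cnj (cis (w * of_int j * x)))"
        by (rule integral_mult_right_zero)
      show ?thesis unfolding z1 z2 orth[of j] by simp
    qed
    finally have s0: "(LINT x|lborel. cnj d * (Dm x * cnj (cis (w * of_int j * x))) + Dm x * cnj (\<Sum>(j,d)\<leftarrow>xs. d * cis (w * of_int j * x))) = 0" .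
    show ?case unfolding e by (rule conjI[OF Bochner_Integration.integrable_add[OF i1 i2] s0])
  qed
  moreover have "P = (\<lambda>x. (\<Sum>(j,d)\<leftarrow>xs. d * cis (w * of_int j * x)))" using F by auto
  ultimately show ?thesis by simp
qed



lemma vd_cis_lin:
  fixes a :: real
  shows "((\<lambda>x. cis (a * x)) has_vector_derivative (complex_of_real a * \<i> * cis (a * x))) (at x within S)"
proof -
  have "((\<lambda>x. cis (a * x)) has_derivative (\<lambda>t. (a * t) *\<^sub>R (\<i> * cis (a * x)))) (at x within S)"
    by (rule has_derivative_cis[OF bounded_linear_imp_has_derivative[OF bounded_linear_mult_right]])
  then show ?thesis unfolding has_vector_derivative_def
    by (simp add: scaleR_conv_of_real algebra_simps)
qed

lemma orth_int:
  fixes L c0 :: real and m :: int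
  assumes L: "L > 0"
  shows "(LINT x|lborel. indicator {c0 - L/2..c0 + L/2} x *\<^sub>R cis (2*pi/L * of_int m * x)) = (if m = 0 then complex_of_real L else 0)"
proof (cases "m = 0")
  case True
  have "(LINT x|lborel. indicator {c0 - L/2..c0 + L/2} x *\<^sub>R (1::complex)) = complex_of_real (c0 + L/2) - complex_of_real (c0 - L/2)"
    using L by (intro integral_FTC_atLeastAtMost) (auto intro!: derivative_eq_intros)
  then show ?thesis using True by simp
next
  case False
  define a where "a = 2*pi/L * of_int m"
  have a0: "a \<noteq> 0" using False L by (simp add: a_def)
  let ?F = "\<lambda>x. cis (a * x) / (complex_of_real a * \<i>)"
  have "(LINT x|lborel. indicator {c0 - L/2..c0 + L/2} x *\<^sub>R cis (a * x)) = ?F (c0 + L/2) - ?F (c0 - L/2)"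
  proof (rule integral_FTC_atLeastAtMost)
    show "c0 - L/2 \<le> c0 + L/2" using L by simp
    fix x
    have "((\<lambda>x. cis (a * x) / (complex_of_real a * \<i>)) has_vector_derivative (complex_of_real a * \<i> * cis (a * x)) / (complex_of_real a * \<i>)) (at x within {c0 - L/2..c0 + L/2})"
      by (rule has_vector_derivative_divide[OF vd_cis_lin])
    then show "(?F has_vector_derivative cis (a * x)) (at x within {c0 - L/2..c0 + L/2})"
      using a0 by simp
  next
    show "continuous_on {c0 - L / 2..c0 + L / 2} (\<lambda>x. cis (a * x))"
      by (intro continuous_intros)
  qed
  also have "\<dots> = 0"
  proof -
    have "cis (a * (c0 + L/2)) = cis (a * (c0 - L/2)) * cis (2 * pi * of_int m)"
      using L by (simp add: cis_mult a_def field_simps)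
    also have "cis (2 * pi * of_int m) = 1" by simp
    finally show ?thesis by simp
  qed
  finally show ?thesis using False by (simp add: a_def)
qed



lemma meas_cis: "(\<lambda>x. cis (t * x)) \<in> borel_measurable borel"
  by (intro borel_measurable_continuous_onI continuous_intros)

lemma integrable_mult_cis:
  fixes Q :: "real \<Rightarrow> complex"
  assumes Q: "integrable lborel Q"
  shows "integrable lborel (\<lambda>x. c * (Q x * cnj (cis (t * x))))"
proof (rule Bochner_Integration.integrable_bound[OF integrable_mult_right[OF Q, of c]])
  have m: "Q \<in> borel_measurable borel" using Q by (simp add: borel_measurable_integrable)
  have "(\<lambda>x. cnj (cis (t * x))) \<in> borel_measurable borel"
    by (intro borel_measurable_continuous_onI continuous_intros)
  then show "(\<lambda>x. c * (Q x * cnj (cis (t * x)))) \<in> borel_measurable lborel"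
    using m by (simp add: borel_measurable_times)
qed (auto simp: norm_mult)

lemma series_int:
  fixes a :: "nat \<Rightarrow> complex" and fr :: "nat \<Rightarrow> real" and Q :: "real \<Rightarrow> complex"
  assumes sa: "summable (\<lambda>n. norm (a n))" and Q: "integrable lborel Q"
  shows "integrable lborel (\<lambda>x. Q x * cnj (\<Sum>n. a n * cis (fr n * x)))"
    and "(LINT x|lborel. Q x * cnj (\<Sum>n. a n * cis (fr n * x))) = (\<Sum>n. cnj (a n) * (LINT x|lborel. Q x * cnj (cis (fr n * x))))"
proof -
  define f where "f n x = cnj (a n) * (Q x * cnj (cis (fr n * x)))" for n x
  have nf: "norm (f n x) = norm (a n) * norm (Q x)" for n x by (simp add: f_def norm_mult)
  have sm: "summable (\<lambda>n. a n * cis (fr n * x))" for x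
    by (rule summable_norm_cancel) (simp add: norm_mult sa)
  have eq: "Q x * cnj (\<Sum>n. a n * cis (fr n * x)) = (\<Sum>n. f n x)" for x
  proof -
    have s0: "(\<lambda>n. a n * cis (fr n * x)) sums (\<Sum>n. a n * cis (fr n * x))" by (rule summable_sums[OF sm])
    have s1: "(\<lambda>n. cnj (a n * cis (fr n * x))) sums cnj (\<Sum>n. a n * cis (fr n * x))"
      using s0 by (simp only: sums_cnj)
    have c1: "cnj (\<Sum>n. a n * cis (fr n * x)) = (\<Sum>n. cnj (a n * cis (fr n * x)))" using s1 by (rule sums_unique)
    have c2: "summable (\<lambda>n. cnj (a n * cis (fr n * x)))" using s1 by (rule sums_summable)
    have "Q x * cnj (\<Sum>n. a n * cis (fr n * x)) = (\<Sum>n. Q x * cnj (a n * cis (fr n * x)))"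
      unfolding c1 by (rule suminf_mult[OF c2, symmetric])
    also have "\<dots> = (\<Sum>n. f n x)" by (simp add: f_def mult.left_commute)
    finally show ?thesis .
  qed
  have i: "integrable lborel (f n)" for n
    unfolding f_def by (rule integrable_mult_cis[OF Q])
  have s1: "AE x in lborel. summable (\<lambda>n. norm (f n x))"
    by (simp add: nf summable_mult2 sa)
  have s2: "summable (\<lambda>n. LINT x|lborel. norm (f n x))"
    by (simp add: nf) (rule summable_mult2[OF sa])
  have "integrable lborel (\<lambda>x. \<Sum>n. f n x)" by (rule integrable_suminf[OF i s1 s2])
  then show "integrable lborel (\<lambda>x. Q x * cnj (\<Sum>n. a n * cis (fr n * x)))" by (simp add: eq)
  have fi: "integral\<^sup>L lborel (f n) = cnj (a n) * (LINT x|lborel. Q x * cnj (cis (fr n * x)))" for n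
    unfolding f_def by simp
  have "(LINT x|lborel. Q x * cnj (\<Sum>n. a n * cis (fr n * x))) = (\<integral>x. (\<Sum>n. f n x) \<partial>lborel)"
    by (simp only: eq)
  also have "\<dots> = (\<Sum>n. integral\<^sup>L lborel (f n))" by (rule integral_suminf[OF i s1 s2])
  also have "\<dots> = (\<Sum>n. cnj (a n) * (LINT x|lborel. Q x * cnj (cis (fr n * x))))" by (simp only: fi)
  finally show "(LINT x|lborel. Q x * cnj (\<Sum>n. a n * cis (fr n * x))) = (\<Sum>n. cnj (a n) * (LINT x|lborel. Q x * cnj (cis (fr n * x))))" .
qed



lemma arg_big:
  assumes z: "norm z = 1" and d: "dist z (-1) < 1"
  shows "\<bar>Arg z\<bar> > 2*pi/3"
proof -
  have z0: "z \<noteq> 0" using z by auto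
  have "cmod (z + 1) < 1" using d by (simp add: dist_norm)
  then have "(cmod (z+1))^2 < 1" by (simp add: power_less_one_iff abs_square_less_1)
  then have "(Re z + 1)^2 + (Im z)^2 < 1" by (simp add: cmod_power2)
  moreover have "(Re z)^2 + (Im z)^2 = 1" using z by (simp add: cmod_power2[symmetric])
  ultimately have re: "Re z < -1/2" by (simp add: power2_eq_square algebra_simps)
  have "cis (Arg z) = z" using cis_Arg[OF z0] z by (simp add: sgn_div_norm)
  then have "cos (Arg z) = Re z" by (metis cis.sel(1))
  then have c: "cos (Arg z) < -1/2" using re by simp
  show ?thesis
  proof (rule ccontr)
    assume "\<not> ?thesis"
    then have le: "\<bar>Arg z\<bar> \<le> 2*pi/3" by simp
    have "cos (2*pi/3) \<le> cos \<bar>Arg z\<bar>"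
      using le pi_gt_zero by (intro cos_monotone_0_pi_le) auto
    moreover have "cos \<bar>Arg z\<bar> = cos (Arg z)" by (simp add: abs_if)
    moreover have "cos (2*pi/3) = -1/2"
    proof -
      have "cos (2*pi/3) = cos (pi - pi/3)" by (rule arg_cong[of _ _ cos]) simp
      also have "\<dots> = - cos (pi/3)" by (rule cos_pi_minus)
      finally show ?thesis using cos_60 by simp
    qed
    ultimately show False using c by simp
  qed
qed

lemma cont_tilde:
  fixes \<phi> :: "real \<Rightarrow> complex" and w c0 :: real
  assumes cont: "\<And>x. isCont \<phi> x"
    and zero: "\<And>x. \<bar>(x - c0) * w\<bar> > 2*pi/3 \<Longrightarrow> \<phi> x = 0"
    and w: "w > 0"
  shows "continuous_on (sphere 0 1) (\<lambda>z. \<phi> (c0 + Arg z / w))"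
proof -
  have "continuous (at z within sphere 0 1) (\<lambda>z. \<phi> (c0 + Arg z / w))" if zs: "z \<in> sphere 0 1" for z
  proof (cases "z \<in> \<real>\<^sub>\<le>\<^sub>0")
    case False
    have "isCont (\<lambda>z. c0 + Arg z / w) z"
      using continuous_at_Arg[OF False] w by (intro continuous_intros) auto
    then have "isCont (\<lambda>z. \<phi> (c0 + Arg z / w)) z"
      using cont by (rule isCont_o2)
    then show ?thesis by (rule continuous_at_imp_continuous_within)
  next
    case True
    then obtain r where r: "z = of_real r" "r \<le> 0" by (auto simp: nonpos_Reals_def)
    then have "\<bar>r\<bar> = 1" using zs by simp
    then have "z = -1" using r by simp
    moreover have "continuous (at (-1) within sphere 0 1) (\<lambda>z. \<phi> (c0 + Arg z / w))"
    proof (rule continuous_transform_within[of _ _ "\<lambda>_. 0" 1])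
      show "continuous (at (-1) within sphere 0 1) (\<lambda>_. 0::complex)" by simp
      show "(0::real) < 1" by simp
      show "(-1::complex) \<in> sphere 0 1" by simp
      fix x' :: complex assume x': "x' \<in> sphere 0 1" "dist x' (-1) < 1"
      then have "\<bar>Arg x'\<bar> > 2*pi/3" by (intro arg_big) auto
      moreover have "(c0 + Arg x' / w - c0) * w = Arg x'" using w by simp
      ultimately show "0 = \<phi> (c0 + Arg x' / w)" using zero[of "c0 + Arg x' / w"] by simp
    qed
    ultimately show ?thesis by simp
  qed
  then show ?thesis by (simp add: continuous_on_eq_continuous_within)
qed

lemma bdd_interval_facts:
  assumes "bdd_interval I"
  shows "ilen I > 0" and "\<And>x. x \<in> I \<Longrightarrow> Inf I \<le> x \<and> x \<le> Sup I"
proof -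
  show "ilen I > 0" using assms by (simp add: bdd_interval_def ilen_def)
  fix x assume x: "x \<in> I"
  have b: "bounded I" using assms by (simp add: bdd_interval_def)
  show "Inf I \<le> x \<and> x \<le> Sup I"
    using x b by (auto intro: cInf_lower cSup_upper bounded_imp_bdd_below bounded_imp_bdd_above)
qed

lemma far_out:
  assumes o: "bdd_interval \<omega>" and len: "ilen \<omega> = 1 / l" and l: "l > 0" and xi: "\<xi> \<in> \<omega>"
    and z: "\<zeta> \<notin> iscale 5 \<omega>"
  shows "\<bar>\<zeta> - \<xi>\<bar> \<ge> 2 / l"
proof -
  have "Inf \<omega> \<le> \<xi>" "\<xi> \<le> Sup \<omega>" using bdd_interval_facts(2)[OF o xi] by auto
  then have "\<xi> - icenter \<omega> \<le> ilen \<omega> / 2" "icenter \<omega> - \<xi> \<le> ilen \<omega> / 2"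
    unfolding icenter_def ilen_def by (simp_all add: field_simps)
  then have "\<bar>\<xi> - icenter \<omega>\<bar> \<le> ilen \<omega> / 2" by linarith
  moreover have "\<bar>\<zeta> - icenter \<omega>\<bar> > 5 * ilen \<omega> / 2" using z unfolding iscale_def by (auto simp: not_le abs_if)
  ultimately have "\<bar>\<zeta> - \<xi>\<bar> \<ge> 2 * ilen \<omega>" by linarith
  then show ?thesis using len by simp
qed



lemma core:
  fixes \<phi> h :: "real \<Rightarrow> complex" and l U c0 \<xi> E N :: real
  assumes l: "l > 0" and U: "U \<ge> 1" and N: "N \<ge> 2" and E: "E \<ge> 0"
    and cont: "\<And>x. isCont \<phi> x"
    and zero: "\<And>x. \<bar>x - c0\<bar> > U*l/2 \<Longrightarrow> \<phi> x = 0"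
    and decay: "\<And>\<zeta>. \<bar>\<zeta> - \<xi>\<bar> \<ge> 2/l \<Longrightarrow> norm (fourier \<phi> \<zeta>) \<le> E * sqrt l * (l*\<bar>\<zeta>-\<xi>\<bar>) powr (-N)"
    and hI: "integrable lborel h"
    and hz0: "\<And>x. \<bar>x - c0\<bar> > 3*U*l/2 \<Longrightarrow> h x = 0"
    and hz: "\<And>k::int. \<bar>of_int k/(3*U*l) - \<xi>\<bar> < 2/l \<Longrightarrow> fourier h (of_int k/(3*U*l)) = 0"
  shows "norm (inner_L2 h (\<lambda>x. complex_of_real (sqrt l) * \<phi> x)) \<le> 2 * E * L1_norm h"
proof -
  define L where "L = 3*U*l"
  define w where "w = 2*pi/L"
  define I where "I = {c0 - L/2..c0 + L/2}"
  define s where "s = l / L"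
  define y where "y = l * \<xi>"
  define e where "e = int_decode"
  define F where "F k = fourier \<phi> (of_int k / L)" for k :: int
  define a where "a n = F (e n) / complex_of_real L" for n
  define fr where "fr n = w * of_int (e n)" for n
  define g where "g x = (\<Sum>n. a n * cis (fr n * x))" for x
  have L0: "L > 0" using l U by (simp add: L_def)
  have w0: "w > 0" using L0 by (simp add: w_def)
  have s0: "0 < s" using l L0 by (simp add: s_def)
  have s3: "s \<le> 1/3" using l U by (simp add: s_def L_def field_simps)
  have sL: "s * L = l" using L0 by (simp add: s_def)
  have inje: "inj e" using inj_int_decode[of UNIV] by (simp add: e_def)
  have \<phi>m: "\<phi> \<in> borel_measurable borel"
    using cont by (intro borel_measurable_continuous_onI continuous_at_imp_continuous_on) auto
  have \<phi>zI: "\<phi> x = 0" if "x \<notin> I" for x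
  proof -
    have "\<bar>x - c0\<bar> > L/2" using that by (auto simp: I_def abs_if)
    moreover have "L/2 \<ge> U*l/2" using l U by (simp add: L_def)
    ultimately show ?thesis using zero by simp
  qed
  have \<phi>eq: "\<phi> x = indicator I x *\<^sub>R \<phi> x" for x
    using \<phi>zI[of x] by (cases "x \<in> I") auto
  have cI: "compact I" by (simp add: I_def)
  have contI: "continuous_on I \<phi>" using cont by (intro continuous_at_imp_continuous_on) auto
  have \<phi>int: "integrable lborel \<phi>"
    by (subst \<phi>eq[abs_def]) (rule borel_integrable_compact[OF cI contI])
  obtain Pm where Pm: "\<And>x. norm (\<phi> x) \<le> Pm"
  proof -
    have "bounded (\<phi> ` I)" using compact_continuous_image[OF contI cI] by (rule compact_imp_bounded)
    then obtain M where M: "\<And>x. x \<in> I \<Longrightarrow> norm (\<phi> x) \<le> M" by (auto simp: bounded_iff)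
    have "norm (\<phi> x) \<le> max M 0" for x using M[of x] \<phi>zI[of x] by (cases "x \<in> I") auto
    then show ?thesis using that by blast
  qed
  define \<Phi>1 where "\<Phi>1 = (LINT x|lborel. norm (\<phi> x))"
  have Fb: "norm (F k) \<le> \<Phi>1" for k
  proof -
    have "norm (F k) \<le> (LINT x|lborel. norm (\<phi> x * cis (- 2 * pi * x * (of_int k / L))))"
      unfolding F_def fourier_def by (rule integral_norm_bound)
    also have "\<dots> = \<Phi>1" by (simp add: \<Phi>1_def norm_mult)
    finally show ?thesis .
  qed
  have tk: "l * \<bar>of_int k / L - \<xi>\<bar> = \<bar>of_int k * s - y\<bar>" for k :: int
  proof -
    have "l * \<bar>of_int k / L - \<xi>\<bar> = \<bar>l * (of_int k / L - \<xi>)\<bar>" using l by (simp add: abs_mult)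
    also have "l * (of_int k / L - \<xi>) = of_int k * s - y" using L0 by (simp add: s_def y_def field_simps)
    finally show ?thesis .
  qed
  have farI: "\<bar>of_int k / L - \<xi>\<bar> \<ge> 2/l \<longleftrightarrow> \<bar>of_int k * s - y\<bar> \<ge> 2" for k :: int
    using tk[of k] l by (simp add: field_simps)
  have Ffar: "norm (F k) \<le> E * sqrt l * \<bar>of_int k * s - y\<bar> powr (-N)" if "\<bar>of_int k * s - y\<bar> \<ge> 2" for k :: int
    using decay[of "of_int k / L"] that farI[of k] tk[of k] by (simp add: F_def)
  have near_fin: "finite {k::int. \<not> \<bar>of_int k * s - y\<bar> \<ge> 2}"
  proof (rule finite_subset)
    show "{k::int. \<not> \<bar>of_int k * s - y\<bar> \<ge> 2} \<subseteq> {\<lfloor>(y-2)/s\<rfloor>..\<lceil>(y+2)/s\<rceil>}"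
    proof
      fix k :: int assume "k \<in> {k::int. \<not> \<bar>of_int k * s - y\<bar> \<ge> 2}"
      then have k: "of_int k * s < y + 2" "of_int k * s > y - 2" by auto
      have "of_int k < (y+2)/s" using k s0 by (simp add: field_simps)
      then have "k \<le> \<lceil>(y+2)/s\<rceil>" by linarith
      moreover have "of_int k > (y-2)/s" using k s0 by (simp add: field_simps)
      then have "\<lfloor>(y-2)/s\<rfloor> \<le> k" by linarith
      ultimately show "k \<in> {\<lfloor>(y-2)/s\<rfloor>..\<lceil>(y+2)/s\<rceil>}" by simp
    qed
  qed simp
  define Nr where "Nr = {k::int. \<not> \<bar>of_int k * s - y\<bar> \<ge> 2}"
  have lat: "(\<Sum>k\<in>S. if \<bar>of_int k * s - y\<bar> \<ge> 2 then c * \<bar>of_int k * s - y\<bar> powr (-N) else 0) \<le> 2 * c / s"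
    if "finite S" "c \<ge> 0" for S c
  proof -
    have "(\<Sum>k\<in>S. if \<bar>of_int k * s - y\<bar> \<ge> 2 then c * \<bar>of_int k * s - y\<bar> powr (-N) else 0)
        = (\<Sum>k\<in>{k\<in>S. \<bar>of_int k * s - y\<bar> \<ge> 2}. c * \<bar>of_int k * s - y\<bar> powr (-N))"
      using that(1) by (simp add: sum.inter_filter)
    also have "\<dots> = c / s * (\<Sum>k\<in>{k\<in>S. \<bar>of_int k * s - y\<bar> \<ge> 2}. s * \<bar>of_int k * s - y\<bar> powr (-N))"
      using s0 by (simp add: sum_distrib_left)
    also have "\<dots> \<le> c / s * 2"
      using that s0 s3 N by (intro mult_left_mono lattice_sum) auto
    finally show ?thesis by (simp add: mult.commute)
  qed
  have sa: "summable (\<lambda>n. norm (a n))"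
  proof (rule summableI_nonneg_bounded)
    fix m
    have "(\<Sum>n<m. norm (a n)) = (\<Sum>k\<in>e ` {..<m}. norm (F k) / L)"
      using L0 by (subst sum.reindex) (auto simp: a_def norm_divide inj_on_subset[OF inje])
    also have "\<dots> \<le> (\<Sum>k\<in>e ` {..<m}. (if \<bar>of_int k * s - y\<bar> \<ge> 2 then E * sqrt l / L * \<bar>of_int k * s - y\<bar> powr (-N) else 0)
          + (if k \<in> Nr then \<Phi>1 / L else 0))"
    proof (rule sum_mono)
      fix k show "norm (F k) / L \<le> (if \<bar>of_int k * s - y\<bar> \<ge> 2 then E * sqrt l / L * \<bar>of_int k * s - y\<bar> powr (-N) else 0)
          + (if k \<in> Nr then \<Phi>1 / L else 0)"
        using Ffar[of k] Fb[of k] L0 by (auto simp: Nr_def divide_right_mono)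
    qed
    also have "\<dots> = (\<Sum>k\<in>e ` {..<m}. (if \<bar>of_int k * s - y\<bar> \<ge> 2 then E * sqrt l / L * \<bar>of_int k * s - y\<bar> powr (-N) else 0))
          + (\<Sum>k\<in>e ` {..<m}. (if k \<in> Nr then \<Phi>1 / L else 0))"
      by (rule sum.distrib)
    also have "\<dots> \<le> 2 * (E * sqrt l / L) / s + (\<Sum>k\<in>Nr. \<Phi>1 / L)"
    proof (rule add_mono)
      show "(\<Sum>k\<in>e ` {..<m}. (if \<bar>of_int k * s - y\<bar> \<ge> 2 then E * sqrt l / L * \<bar>of_int k * s - y\<bar> powr (-N) else 0)) \<le> 2 * (E * sqrt l / L) / s"
        using E L0 l by (intro lat) auto
      have "(\<Sum>k\<in>e ` {..<m}. (if k \<in> Nr then \<Phi>1 / L else 0)) = (\<Sum>k\<in>e ` {..<m} \<inter> Nr. \<Phi>1 / L)"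
        by (rule sum.inter_restrict[symmetric]) simp
      also have "\<dots> \<le> (\<Sum>k\<in>Nr. \<Phi>1 / L)"
        using near_fin L0 by (intro sum_mono2) (auto simp: Nr_def \<Phi>1_def)
      finally show "(\<Sum>k\<in>e ` {..<m}. (if k \<in> Nr then \<Phi>1 / L else 0)) \<le> (\<Sum>k\<in>Nr. \<Phi>1 / L)" .
    qed
    finally show "(\<Sum>n<m. norm (a n)) \<le> 2 * (E * sqrt l / L) / s + (\<Sum>k\<in>Nr. \<Phi>1 / L)" .
  qed simp
  have cisI: "integrable lborel (\<lambda>x. indicator I x *\<^sub>R cis (t * x))" for t
    using cI by (rule borel_integrable_compact) (intro continuous_intros)
  have cnjcis: "cnj (cis t) = cis (- t)" for t by (simp add: cis_cnj)
  have coef_g: "integrable lborel (\<lambda>x. indicator I x *\<^sub>R (g x * cnj (cis (w * of_int k * x))))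
      \<and> (LINT x|lborel. indicator I x *\<^sub>R (g x * cnj (cis (w * of_int k * x)))) = F k" for k :: int
  proof -
    define Q where "Q x = indicator I x *\<^sub>R cis (w * of_int k * x)" for x
    have QI: "integrable lborel Q" unfolding Q_def using cisI[of "w * of_int k"] by (simp add: mult.assoc)
    have int1: "integrable lborel (\<lambda>x. Q x * cnj (g x))"
      unfolding g_def by (rule series_int(1)[OF sa QI])
    have "(LINT x|lborel. Q x * cnj (g x)) = (\<Sum>n. cnj (a n) * (LINT x|lborel. Q x * cnj (cis (fr n * x))))"
      unfolding g_def by (rule series_int(2)[OF sa QI])
    also have "\<dots> = (\<Sum>n. if n = int_encode k then cnj (a n) * complex_of_real L else 0)"
    proof (rule arg_cong[where f=suminf], rule ext)
      fix n
      have "Q x * cnj (cis (fr n * x)) = indicator {c0 - L/2..c0 + L/2} x *\<^sub>R cis (2*pi/L * of_int (k - e n) * x)" for x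
      proof -
        have "cis (w * of_int k * x) * cnj (cis (fr n * x)) = cis (2*pi/L * of_int (k - e n) * x)"
          by (simp add: cnjcis cis_mult fr_def w_def algebra_simps diff_divide_distrib)
        then show ?thesis by (simp add: Q_def I_def)
      qed
      then have "(LINT x|lborel. Q x * cnj (cis (fr n * x))) = (if k - e n = 0 then complex_of_real L else 0)"
        using orth_int[OF L0, of c0 "k - e n"] by simp
      moreover have "(k - e n = 0) \<longleftrightarrow> n = int_encode k"
        unfolding e_def by (metis eq_iff_diff_eq_0 int_decode_inverse int_encode_inverse)
      ultimately show "cnj (a n) * (LINT x|lborel. Q x * cnj (cis (fr n * x))) = (if n = int_encode k then cnj (a n) * complex_of_real L else 0)"
        by auto
    qed
    also have "\<dots> = cnj (a (int_encode k)) * complex_of_real L"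
      by (rule sums_unique[symmetric]) (rule sums_single)
    also have "\<dots> = cnj (F k)" using L0 by (simp add: a_def e_def)
    finally have v: "(LINT x|lborel. Q x * cnj (g x)) = cnj (F k)" .
    have pe: "indicator I x *\<^sub>R (g x * cnj (cis (w * of_int k * x))) = cnj (Q x * cnj (g x))" for x
      by (simp add: Q_def mult.commute)
    have "integrable lborel (\<lambda>x. cnj (Q x * cnj (g x)))" by (rule integrable_cnj[OF int1])
    moreover have "(LINT x|lborel. cnj (Q x * cnj (g x))) = cnj (LINT x|lborel. Q x * cnj (g x))"
      by (rule Bochner_Integration.integral_cnj)
    then have "(LINT x|lborel. cnj (Q x * cnj (g x))) = F k" by (simp only: v complex_cnj_cnj)
    ultimately show ?thesis unfolding pe by blast
  qed
  have coef_\<phi>: "integrable lborel (\<lambda>x. indicator I x *\<^sub>R (\<phi> x * cnj (cis (w * of_int k * x))))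
      \<and> (LINT x|lborel. indicator I x *\<^sub>R (\<phi> x * cnj (cis (w * of_int k * x)))) = F k" for k :: int
  proof -
    have pe: "indicator I x *\<^sub>R (\<phi> x * cnj (cis (w * of_int k * x))) = \<phi> x * cis (- 2 * pi * x * (of_int k / L))" for x
    proof -
      have "- (w * of_int k * x) = - 2 * pi * x * (of_int k / L)" by (simp add: w_def)
      then have "cnj (cis (w * of_int k * x)) = cis (- 2 * pi * x * (of_int k / L))" by (simp add: cnjcis)
      then show ?thesis using \<phi>zI[of x] by (cases "x \<in> I") auto
    qed
    have "integrable lborel (\<lambda>x. 1 * (\<phi> x * cnj (cis ((2 * pi * (of_int k / L)) * x))))"
      by (rule integrable_mult_cis[OF \<phi>int])
    moreover have "cnj (cis ((2 * pi * (of_int k / L)) * x)) = cis (- 2 * pi * x * (of_int k / L))" for x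
      by (simp add: cnjcis mult_ac)
    ultimately show ?thesis unfolding pe by (simp add: F_def fourier_def)
  qed
  define Dm where "Dm x = indicator I x *\<^sub>R (\<phi> x - g x)" for x
  have gI: "integrable lborel (\<lambda>x. indicator I x *\<^sub>R g x)"
  proof -
    have "integrable lborel (\<lambda>x. indicator I x *\<^sub>R cis (0 * x) * cnj (g x))"
      unfolding g_def by (rule series_int(1)[OF sa cisI])
    then have i: "integrable lborel (\<lambda>x. cnj (indicator I x *\<^sub>R cis (0 * x) * cnj (g x)))" by (rule integrable_cnj)
    have eq: "(\<lambda>x. cnj (indicator I x *\<^sub>R cis (0 * x) * cnj (g x))) = (\<lambda>x. indicator I x *\<^sub>R g x)"
      by (rule ext) simp
    show ?thesis using i unfolding eq .
  qed
  have DmI: "integrable lborel Dm"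
  proof -
    have "integrable lborel (\<lambda>x. \<phi> x - indicator I x *\<^sub>R g x)" using \<phi>int gI by simp
    moreover have "\<phi> x - indicator I x *\<^sub>R g x = Dm x" for x
      using \<phi>zI[of x] by (cases "x \<in> I") (auto simp: Dm_def)
    ultimately show ?thesis by simp
  qed
  have Dorth: "(LINT x|lborel. Dm x * cnj (cis (w * of_int k * x))) = 0" for k :: int
  proof -
    have "Dm x * cnj (cis (w * of_int k * x)) = indicator I x *\<^sub>R (\<phi> x * cnj (cis (w * of_int k * x))) - indicator I x *\<^sub>R (g x * cnj (cis (w * of_int k * x)))" for x
      by (simp add: Dm_def algebra_simps)
    then show ?thesis using coef_g[of k] coef_\<phi>[of k] by simp
  qed
  have Dg: "(LINT x|lborel. Dm x * cnj (g x)) = 0" and DgI: "integrable lborel (\<lambda>x. Dm x * cnj (g x))"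
  proof -
    have "(LINT x|lborel. Dm x * cnj (g x)) = (\<Sum>n. cnj (a n) * (LINT x|lborel. Dm x * cnj (cis (fr n * x))))"
      unfolding g_def by (rule series_int(2)[OF sa DmI])
    also have "\<dots> = 0" using Dorth by (simp add: fr_def)
    finally show "(LINT x|lborel. Dm x * cnj (g x)) = 0" .
    show "integrable lborel (\<lambda>x. Dm x * cnj (g x))"
      unfolding g_def by (rule series_int(1)[OF sa DmI])
  qed
  define D where "D x = \<phi> x - g x" for x
  have Pm0: "Pm \<ge> 0" using Pm[of 0] norm_ge_zero order_trans by blast
  have Dmm: "Dm \<in> borel_measurable borel" using DmI by (simp add: borel_measurable_integrable)
  have DmphiI: "integrable lborel (\<lambda>x. Dm x * cnj (\<phi> x))"
  proof (rule Bochner_Integration.integrable_bound[OF integrable_mult_right[OF DmI, of "complex_of_real Pm"]])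
    show "(\<lambda>x. Dm x * cnj (\<phi> x)) \<in> borel_measurable lborel"
    proof -
      have "isCont (\<lambda>x. cnj (\<phi> x)) x" for x using cont[of x] by (intro continuous_intros)
      then have "(\<lambda>x. cnj (\<phi> x)) \<in> borel_measurable borel"
        by (intro borel_measurable_continuous_onI continuous_at_imp_continuous_on) auto
      then show ?thesis using Dmm by (simp add: borel_measurable_times)
    qed
    show "AE x in lborel. norm (Dm x * cnj (\<phi> x)) \<le> norm (complex_of_real Pm * Dm x)"
    proof (rule AE_I2)
      fix x
      have "cmod (Dm x) * cmod (\<phi> x) \<le> cmod (Dm x) * Pm" using Pm[of x] by (intro mult_left_mono) auto
      then show "norm (Dm x * cnj (\<phi> x)) \<le> norm (complex_of_real Pm * Dm x)"
        using Pm0 by (simp add: norm_mult mult.commute)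
    qed
  qed
  have DDI: "integrable lborel (\<lambda>x. Dm x * cnj (D x))"
  proof -
    have "integrable lborel (\<lambda>x. Dm x * cnj (\<phi> x) - Dm x * cnj (g x))" using DmphiI DgI by simp
    moreover have "Dm x * cnj (\<phi> x) - Dm x * cnj (g x) = Dm x * cnj (D x)" for x by (simp add: D_def algebra_simps)
    ultimately show ?thesis by simp
  qed
  have R0: "(LINT x|lborel. Dm x * cnj (D x)) = 0"
  proof -
    define R where "R = (LINT x|lborel. Dm x * cnj (D x))"
    define M0 where "M0 = (LINT x|lborel. norm (Dm x))"
    have M00: "M0 \<ge> 0" unfolding M0_def by simp
    have eqR: "R = (LINT x|lborel. Dm x * cnj (\<phi> x))"
    proof -
      have "R = (LINT x|lborel. Dm x * cnj (\<phi> x) - Dm x * cnj (g x))"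
        unfolding R_def by (rule arg_cong[where f="integral\<^sup>L lborel"]) (simp add: D_def algebra_simps fun_eq_iff)
      also have "\<dots> = (LINT x|lborel. Dm x * cnj (\<phi> x)) - (LINT x|lborel. Dm x * cnj (g x))"
        by (rule Bochner_Integration.integral_diff[OF DmphiI DgI])
      finally show ?thesis using Dg by simp
    qed
    have bnd: "norm R \<le> \<epsilon> * M0" if eps: "\<epsilon> > 0" for \<epsilon>
    proof -
      have ct: "continuous_on (sphere 0 1) (\<lambda>z. \<phi> (c0 + Arg z / w))"
      proof (rule cont_tilde[OF cont _ w0])
        fix x assume x: "\<bar>(x - c0) * w\<bar> > 2*pi/3"
        have "\<bar>x - c0\<bar> * (2*pi/L) > 2*pi/3" using x w0 L0 by (simp add: w_def abs_mult)
        then have "\<bar>x - c0\<bar> > L/3" using L0 by (simp add: field_simps)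
        moreover have "L/3 \<ge> U*l/2" using l U by (simp add: L_def)
        ultimately show "\<phi> x = 0" using zero by simp
      qed
      obtain p where p: "polynomial_function p" and pc: "\<forall>z\<in>sphere 0 1. norm ((\<lambda>z. \<phi> (c0 + Arg z / w)) z - p z) < \<epsilon>"
        using Stone_Weierstrass_polynomial_function[OF compact_sphere ct eps] by blast
      define P where "P x = p (cis (w * (x - c0)))" for x
      have tP: "trig w P" unfolding P_def by (rule trig_poly[OF p])
      have o: "integrable lborel (\<lambda>x. Dm x * cnj (P x)) \<and> (LINT x|lborel. Dm x * cnj (P x)) = 0"
        by (rule trig_orth[OF DmI Dorth tP])
      have close: "norm (\<phi> x - P x) < \<epsilon>" if xI: "x \<in> I" for x
      proof -
        have xr: "- pi \<le> w * (x - c0)" "w * (x - c0) \<le> pi"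
        proof -
          have a1: "\<bar>x - c0\<bar> \<le> L/2" using xI by (auto simp: I_def abs_if)
          have "\<bar>w * (x - c0)\<bar> = w * \<bar>x - c0\<bar>" using w0 by (simp add: abs_mult)
          also have "\<dots> \<le> w * (L/2)" using a1 w0 by (intro mult_left_mono) auto
          also have "\<dots> = pi" using L0 by (simp add: w_def)
          finally show "- pi \<le> w * (x - c0)" "w * (x - c0) \<le> pi" by (simp_all add: abs_le_iff)
        qed
        have "\<phi> (c0 + Arg (cis (w * (x - c0))) / w) = \<phi> x"
        proof (cases "w * (x - c0) = - pi")
          case False
          then have "Arg (cis (w * (x - c0))) = w * (x - c0)" using xr by (intro Arg_cis) auto
          then show ?thesis using w0 by simp
        next
          case True
          have m1: "cis (w * (x - c0)) = -1" unfolding True by (simp add: complex_eq_iff)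
          have z1: "\<phi> (c0 + pi / w) = 0"
          proof (rule zero)
            have "pi / w = L/2" using L0 by (simp add: w_def)
            then have "\<bar>c0 + pi / w - c0\<bar> = L/2" using L0 w0 by simp
            moreover have "L/2 > U*l/2" using l U by (simp add: L_def)
            ultimately show "\<bar>c0 + pi / w - c0\<bar> > U*l/2" by simp
          qed
          have "x = c0 - pi / w" using True w0 by (simp add: field_simps)
          moreover have "pi / w = L/2" using L0 by (simp add: w_def)
          ultimately have "\<phi> x = 0" using l U L0 zero[of x] by (simp add: L_def)
          moreover have "Arg (-1) = pi" using Arg_of_real[of "-1"] by simp
          ultimately show ?thesis using m1 z1 by simp
        qed
        moreover have "cis (w * (x - c0)) \<in> sphere 0 1" by simp
        then have "norm (\<phi> (c0 + Arg (cis (w * (x - c0))) / w) - p (cis (w * (x - c0)))) < \<epsilon>"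
          using pc by blast
        ultimately show ?thesis by (simp add: P_def)
      qed
      have DPI: "integrable lborel (\<lambda>x. Dm x * cnj (\<phi> x - P x))"
      proof -
        have "integrable lborel (\<lambda>x. Dm x * cnj (\<phi> x) - Dm x * cnj (P x))" using DmphiI o by simp
        moreover have "Dm x * cnj (\<phi> x) - Dm x * cnj (P x) = Dm x * cnj (\<phi> x - P x)" for x by (simp add: algebra_simps)
        ultimately show ?thesis by simp
      qed
      have "R = (LINT x|lborel. Dm x * cnj (\<phi> x)) - (LINT x|lborel. Dm x * cnj (P x))" using eqR o by simp
      also have "\<dots> = (LINT x|lborel. Dm x * cnj (\<phi> x) - Dm x * cnj (P x))"
        by (rule Bochner_Integration.integral_diff[OF DmphiI conjunct1[OF o], symmetric])
      also have "\<dots> = (LINT x|lborel. Dm x * cnj (\<phi> x - P x))" by (simp add: algebra_simps)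
      finally have "norm R \<le> (LINT x|lborel. norm (Dm x * cnj (\<phi> x - P x)))" by simp
      also have "\<dots> \<le> (LINT x|lborel. \<epsilon> * norm (Dm x))"
      proof (rule integral_mono)
        show "integrable lborel (\<lambda>x. norm (Dm x * cnj (\<phi> x - P x)))" using DPI by simp
        show "integrable lborel (\<lambda>x. \<epsilon> * norm (Dm x))" using DmI by simp
        fix x
        show "norm (Dm x * cnj (\<phi> x - P x)) \<le> \<epsilon> * norm (Dm x)"
        proof (cases "x \<in> I")
          case True
          have "norm (cnj (\<phi> x - P x)) \<le> \<epsilon>" unfolding complex_mod_cnj using close[OF True] by (rule less_imp_le)
          then have "norm (Dm x) * norm (cnj (\<phi> x - P x)) \<le> norm (Dm x) * \<epsilon>" by (rule mult_left_mono) simp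
          then show ?thesis by (simp only: norm_mult mult.commute)
        next
          case False
          then show ?thesis by (simp add: Dm_def)
        qed
      qed
      also have "\<dots> = \<epsilon> * M0" by (simp add: M0_def)
      finally show ?thesis .
    qed
    show ?thesis
    proof (rule ccontr)
      assume "(LINT x|lborel. Dm x * cnj (D x)) \<noteq> 0"
      then have Rp: "norm R > 0" by (simp add: R_def)
      have "norm R \<le> norm R / (M0 + 1) * M0" using bnd[of "norm R / (M0 + 1)"] Rp M00 by simp
      also have "\<dots> < norm R" using Rp M00 by (simp add: field_simps)
      finally show False by simp
    qed
  qed
  have AE0: "AE x in lborel. x \<in> I \<longrightarrow> \<phi> x = g x"
  proof -
    define f where "f x = indicator I x * (norm (D x))^2" for x
    have fe: "Re (Dm x * cnj (D x)) = f x" for x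
    proof -
      have "Dm x * cnj (D x) = complex_of_real (indicator I x) * (D x * cnj (D x))"
        by (simp add: Dm_def D_def scaleR_conv_of_real)
      also have "\<dots> = complex_of_real (f x)" unfolding f_def complex_norm_square[symmetric] by simp
      finally show ?thesis by simp
    qed
    have fI: "integrable lborel f"
    proof -
      have "integrable lborel (\<lambda>x. Re (Dm x * cnj (D x)))" using DDI by (rule integrable_Re)
      then show ?thesis unfolding fe .
    qed
    have "(LINT x|lborel. f x) = (LINT x|lborel. Re (Dm x * cnj (D x)))" by (simp only: fe)
    also have "\<dots> = Re (LINT x|lborel. Dm x * cnj (D x))" by (rule Bochner_Integration.integral_Re[OF DDI])
    finally have "(LINT x|lborel. f x) = Re (LINT x|lborel. Dm x * cnj (D x))" .
    then have "(LINT x|lborel. f x) = 0" using R0 by simp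
    moreover have "AE x in lborel. 0 \<le> f x" by (simp add: f_def)
    ultimately have "AE x in lborel. f x = 0" using integral_nonneg_eq_0_iff_AE[OF fI] by blast
    then show ?thesis by eventually_elim (auto simp: f_def D_def)
  qed
  define H where "H = L1_norm h"
  have hm: "h \<in> borel_measurable borel" using hI by (simp add: borel_measurable_integrable)
  have cphim: "(\<lambda>x. cnj (\<phi> x)) \<in> borel_measurable borel"
  proof -
    have "isCont (\<lambda>x. cnj (\<phi> x)) x" for x using cont[of x] by (intro continuous_intros)
    then show ?thesis by (intro borel_measurable_continuous_onI continuous_at_imp_continuous_on) auto
  qed
  have hgI: "integrable lborel (\<lambda>x. h x * cnj (g x))" unfolding g_def by (rule series_int(1)[OF sa hI])
  have hzI: "h x = 0" if "x \<notin> I" for x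
  proof -
    have "\<bar>x - c0\<bar> > L/2" using that by (auto simp: I_def abs_if)
    then show ?thesis using hz0 by (simp add: L_def)
  qed
  have inner_eq: "inner_L2 h (\<lambda>x. complex_of_real (sqrt l) * \<phi> x) = complex_of_real (sqrt l) * (LINT x|lborel. h x * cnj (\<phi> x))"
  proof -
    have "h x * cnj (complex_of_real (sqrt l) * \<phi> x) = complex_of_real (sqrt l) * (h x * cnj (\<phi> x))" for x
      by (simp add: mult_ac)
    then have "inner_L2 h (\<lambda>x. complex_of_real (sqrt l) * \<phi> x) = (LINT x|lborel. complex_of_real (sqrt l) * (h x * cnj (\<phi> x)))"
      unfolding inner_L2_def by (simp only:)
    also have "\<dots> = complex_of_real (sqrt l) * (LINT x|lborel. h x * cnj (\<phi> x))" by (rule integral_mult_right_zero)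
    finally show ?thesis .
  qed
  have "(LINT x|lborel. h x * cnj (\<phi> x)) = (LINT x|lborel. h x * cnj (g x))"
  proof (rule integral_cong_AE)
    show "(\<lambda>x. h x * cnj (\<phi> x)) \<in> borel_measurable lborel" using hm cphim by (simp add: borel_measurable_times)
    show "(\<lambda>x. h x * cnj (g x)) \<in> borel_measurable lborel" using hgI by (simp add: borel_measurable_integrable)
    show "AE x in lborel. h x * cnj (\<phi> x) = h x * cnj (g x)"
      using AE0 by eventually_elim (use hzI in auto)
  qed
  also have "\<dots> = (\<Sum>n. cnj (a n) * (LINT x|lborel. h x * cnj (cis (fr n * x))))"
    unfolding g_def by (rule series_int(2)[OF sa hI])
  also have "\<dots> = (\<Sum>n. cnj (a n) * fourier h (of_int (e n) / L))"
  proof -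
    have "cnj (cis (fr n * x)) = cis (- 2 * pi * x * (of_int (e n) / L))" for n x
    proof -
      have "- (fr n * x) = - 2 * pi * x * (of_int (e n) / L)" by (simp add: fr_def w_def)
      then show ?thesis by (simp add: cnjcis)
    qed
    then show ?thesis by (simp add: fourier_def)
  qed
  finally have eqS: "(LINT x|lborel. h x * cnj (\<phi> x)) = (\<Sum>n. cnj (a n) * fourier h (of_int (e n) / L))" .
  define b where "b n = cnj (a n) * fourier h (of_int (e n) / L)" for n
  define v where "v n = (if \<bar>of_int (e n) * s - y\<bar> \<ge> 2 then E * sqrt l * H / L * \<bar>of_int (e n) * s - y\<bar> powr (-N) else 0)" for n
  have H0: "H \<ge> 0" by (simp add: H_def L1_norm_def)
  have hb: "norm (fourier h \<zeta>) \<le> H" for \<zeta>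
  proof -
    have "norm (fourier h \<zeta>) \<le> (LINT x|lborel. norm (h x * cis (- 2 * pi * x * \<zeta>)))"
      unfolding fourier_def by (rule integral_norm_bound)
    also have "\<dots> = H" by (simp add: H_def L1_norm_def norm_mult)
    finally show ?thesis .
  qed
  have bv: "norm (b n) \<le> v n" for n
  proof (cases "\<bar>of_int (e n) * s - y\<bar> \<ge> 2")
    case True
    have "norm (b n) = norm (F (e n)) / L * norm (fourier h (of_int (e n) / L))"
      using L0 by (simp add: b_def a_def norm_mult norm_divide)
    also have "\<dots> \<le> (E * sqrt l * \<bar>of_int (e n) * s - y\<bar> powr (-N)) / L * H"
      using Ffar[OF True] hb L0 E l by (intro mult_mono divide_right_mono) auto
    also have "\<dots> = v n" using True by (simp add: v_def)
    finally show ?thesis .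
  next
    case False
    then have "\<bar>of_int (e n) / L - \<xi>\<bar> < 2/l" using farI[of "e n"] by simp
    then have "fourier h (of_int (e n) / L) = 0" using hz[of "e n"] by (simp add: L_def)
    then show ?thesis using False by (simp add: b_def v_def)
  qed
  have v0: "v n \<ge> 0" for n using E H0 l L0 by (simp add: v_def)
  have vsum: "sum v {..<m} \<le> 2 * (E * sqrt l * H / L) / s" for m
  proof -
    have "sum v {..<m} = (\<Sum>k\<in>e ` {..<m}. if \<bar>of_int k * s - y\<bar> \<ge> 2 then E * sqrt l * H / L * \<bar>of_int k * s - y\<bar> powr (-N) else 0)"
      by (subst sum.reindex) (auto simp: v_def inj_on_subset[OF inje])
    also have "\<dots> \<le> 2 * (E * sqrt l * H / L) / s"
      using E H0 L0 l by (intro lat) auto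
    finally show ?thesis .
  qed
  have sv: "summable v" by (rule summableI_nonneg_bounded[OF v0 vsum])
  have snb: "summable (\<lambda>n. norm (b n))" by (rule summable_comparison_test'[OF sv]) (simp add: bv)
  have "norm (LINT x|lborel. h x * cnj (\<phi> x)) \<le> (\<Sum>n. norm (b n))"
    unfolding eqS b_def[symmetric] by (rule summable_norm[OF snb])
  also have "\<dots> \<le> suminf v" by (rule suminf_le[OF bv snb sv])
  also have "\<dots> \<le> 2 * (E * sqrt l * H / L) / s" by (rule suminf_le_const[OF sv vsum])
  finally have nb: "norm (LINT x|lborel. h x * cnj (\<phi> x)) \<le> 2 * (E * sqrt l * H / L) / s" .
  have "norm (inner_L2 h (\<lambda>x. complex_of_real (sqrt l) * \<phi> x)) = sqrt l * norm (LINT x|lborel. h x * cnj (\<phi> x))"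
    unfolding inner_eq using l by (simp add: norm_mult)
  also have "\<dots> \<le> sqrt l * (2 * (E * sqrt l * H / L) / s)" using nb l by (intro mult_left_mono) auto
  also have "\<dots> = 2 * E * H"
  proof -
    have "sqrt l * sqrt l = l" using l by simp
    then show ?thesis using sL L0 s0 l by (simp add: field_simps)
  qed
  finally show ?thesis by (simp add: H_def)
qed


theorem mainTheorem13:
  fixes B N :: real
  assumes "B > 0" and "N \<ge> 2"
  shows "\<exists>C. \<forall>(u :: real \<Rightarrow> real) (K :: real) (a :: real) (J :: real set) (\<xi>J :: real)
              (\<omega>J :: real set) (\<phi>J :: real \<Rightarrow> complex) (h :: real \<Rightarrow> complex).
    mono_on {0..} u \<and> (\<forall>t\<ge>0. u t > 0) \<and> u K \<ge> 1 \<and>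
    K \<ge> 1 \<and> a > 0 \<and> bdd_interval J \<and>
    bdd_interval \<omega>J \<and> ilen \<omega>J = 1 / ilen J \<and> \<xi>J \<in> \<omega>J \<and>
    smooth \<phi>J \<and> supp \<phi>J \<subseteq> iscale (u K) J \<and>
    (\<forall>\<zeta>. \<bar>\<zeta> - \<xi>J\<bar> \<ge> 2 / ilen J \<longrightarrow>
        norm (fourier \<phi>J \<zeta>) \<le> B * exp (- a * K / 12) * sqrt (ilen J)
                                  * (ilen J * \<bar>\<zeta> - \<xi>J\<bar>) powr (- N)) \<and>
    integrable lborel h \<and> (\<forall>x. x \<notin> iscale (3 * u K) J \<longrightarrow> h x = 0) \<and>
    (\<forall>\<zeta> \<in> iscale 5 \<omega>J. (\<exists>k::int. \<zeta> = of_int k / (3 * u K * ilen J)) \<longrightarrow> fourier h \<zeta> = 0)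
    \<longrightarrow> norm (inner_L2 h (\<lambda>x. complex_of_real (sqrt (ilen J)) * \<phi>J x))
          \<le> C * exp (- a * K / 12) * L1_norm h"
proof (intro exI[of _ "2 * B"] allI impI, elim conjE)
  fix u :: "real \<Rightarrow> real" and K a :: real and J :: "real set" and \<xi>J :: real and \<omega>J :: "real set"
    and \<phi>J :: "real \<Rightarrow> complex" and h :: "real \<Rightarrow> complex"
  assume hmono: "mono_on {0..} u" and hpos: "\<forall>t\<ge>0. u t > 0" and hU: "u K \<ge> 1"
    and hK: "K \<ge> 1" and ha: "a > 0" and hJ: "bdd_interval J"
    and h\<omega>: "bdd_interval \<omega>J" and hlen: "ilen \<omega>J = 1 / ilen J" and hxi: "\<xi>J \<in> \<omega>J"
    and sm: "smooth \<phi>J" and hsupp: "supp \<phi>J \<subseteq> iscale (u K) J"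
    and hdec: "\<forall>\<zeta>. \<bar>\<zeta> - \<xi>J\<bar> \<ge> 2 / ilen J \<longrightarrow>
        norm (fourier \<phi>J \<zeta>) \<le> B * exp (- a * K / 12) * sqrt (ilen J)
                                  * (ilen J * \<bar>\<zeta> - \<xi>J\<bar>) powr (- N)"
    and hI: "integrable lborel h" and hout: "\<forall>x. x \<notin> iscale (3 * u K) J \<longrightarrow> h x = 0"
    and hzer: "\<forall>\<zeta> \<in> iscale 5 \<omega>J. (\<exists>k::int. \<zeta> = of_int k / (3 * u K * ilen J)) \<longrightarrow> fourier h \<zeta> = 0"
  define l where "l = ilen J"
  define U where "U = u K"
  define c0 where "c0 = icenter J"
  define E where "E = B * exp (- a * K / 12)"
  have l: "l > 0" using bdd_interval_facts(1)[OF hJ] by (simp add: l_def)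
  have U: "U \<ge> 1" using hU by (simp add: U_def)
  have E: "E \<ge> 0" using assms by (simp add: E_def)
  have cont: "isCont \<phi>J x" for x
  proof -
    have "vderiv_iter 0 \<phi>J differentiable at x" using sm unfolding smooth_def by blast
    then show ?thesis by (simp add: differentiable_imp_continuous_within)
  qed
  have zero: "\<phi>J x = 0" if "\<bar>x - c0\<bar> > U*l/2" for x
  proof -
    have "x \<notin> iscale (u K) J"
    proof
      assume "x \<in> iscale (u K) J"
      then have "\<bar>x - c0\<bar> \<le> U*l/2" unfolding abs_le_iff by (simp add: iscale_def U_def l_def c0_def)
      then show False using that by linarith
    qed
    then have ns: "x \<notin> supp \<phi>J" by (rule contra_subsetD[OF hsupp])
    show ?thesis
    proof (rule ccontr)
      assume "\<phi>J x \<noteq> 0"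
      then have "x \<in> {x. \<phi>J x \<noteq> 0}" by simp
      then have "x \<in> supp \<phi>J" unfolding supp_def by (rule subsetD[OF closure_subset])
      then show False using ns by (rule notE[rotated])
    qed
  qed
  have decay: "norm (fourier \<phi>J \<zeta>) \<le> E * sqrt l * (l*\<bar>\<zeta>-\<xi>J\<bar>) powr (-N)" if "\<bar>\<zeta> - \<xi>J\<bar> \<ge> 2/l" for \<zeta>
  proof -
    have t: "\<bar>\<zeta> - \<xi>J\<bar> \<ge> 2 / ilen J" using that by (simp only: l_def)
    have "norm (fourier \<phi>J \<zeta>) \<le> B * exp (- a * K / 12) * sqrt (ilen J) * (ilen J * \<bar>\<zeta> - \<xi>J\<bar>) powr (- N)"
      by (rule hdec[rule_format, OF t])
    then show ?thesis unfolding E_def l_def .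
  qed
  have hz0: "h x = 0" if "\<bar>x - c0\<bar> > 3*U*l/2" for x
  proof -
    have "x \<notin> iscale (3 * u K) J"
    proof
      assume "x \<in> iscale (3 * u K) J"
      then have "\<bar>x - c0\<bar> \<le> 3*U*l/2" unfolding abs_le_iff by (simp add: iscale_def U_def l_def c0_def)
      then show False using that by linarith
    qed
    then show ?thesis using hout by blast
  qed
  have hz: "fourier h (of_int k/(3*U*l)) = 0" if "\<bar>of_int k/(3*U*l) - \<xi>J\<bar> < 2/l" for k :: int
  proof -
    have "of_int k/(3*U*l) \<in> iscale 5 \<omega>J"
    proof (rule ccontr)
      assume "of_int k/(3*U*l) \<notin> iscale 5 \<omega>J"
      then have "\<bar>of_int k/(3*U*l) - \<xi>J\<bar> \<ge> 2/l"
        using h\<omega> hlen hxi l by (intro far_out[of \<omega>J l \<xi>J]) (auto simp: l_def)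
      then show False using that by simp
    qed
    moreover have "\<exists>k'::int. of_int k/(3*U*l) = of_int k' / (3 * u K * ilen J)"
      by (rule exI[of _ k]) (simp only: U_def l_def)
    ultimately show ?thesis using hzer by blast
  qed
  have "norm (inner_L2 h (\<lambda>x. complex_of_real (sqrt l) * \<phi>J x)) \<le> 2 * E * L1_norm h"
    by (rule core[OF l U assms(2) E cont zero decay hI hz0 hz])
  then show "norm (inner_L2 h (\<lambda>x. complex_of_real (sqrt (ilen J)) * \<phi>J x)) \<le> 2 * B * exp (- a * K / 12) * L1_norm h"
    unfolding E_def l_def by (simp only: mult.assoc)
qed

end
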